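(* Let $(\mathbf{H},m,\Delta)$ be a self-adjoint poset Hopf monoid. Then its linearization $\mathbf{k}\mathbf{H}$ is commutative and cocommutative.
   Context: $\mathbf{k}$ is a field of characteristic $0$. A (connected) poset species $\mathbf{H}$ assigns to each finite set $I$ a locally finite poset $\mathbf{H}[I]$, $\mathbf{H}[\emptyset]=\{1\}$, and to each bijection an order-preserving bijection, functorially. A poset Hopf monoid $(\mathbf{H},m,\Delta)$ consists of order-preserving maps $m_{S,T}:\mathbf{H}[S]\times\mathbf{H}[T]\to\mathbf{H}[S\sqcup T]$ (natural, associative, unital) and $\Delta_{S,T}:\mathbf{H}[S\sqcup T]\to\mathbf{H}[S]\times\mathbf{H}[T]$ (natural, coassociative, counital), satisfying compatibility: for $I=S_1\sqcup S_2=T_1\sqcup T_2$, $A=S_1\cap T_1$, $B=S_1\cap T_2$, $C=S_2\cap T_1$, $D=S_2\cap T_2$, if $\Delta_{A,B}(x)=(x_A,x_B)$, $\Delta_{C,D}(y)=(y_C,y_D)$ then $\Delta_{T_1,T_2}(m_{S_1,S_2}(x,y))=(m_{A,C}(x_A,y_C),m_{B,D}(x_B,y_D))$. It is self-adjoint if $m_{S,T}$ and $\Delta_{S,T}$ form a Galois connection for all $S,T$ (either $\Delta\dashv m$ or $m\dashv\Delta$). $\mathbf{k}\mathbf{H}$ is the linearization (basis $\mathbf{H}[I]$). A vector space monoid is commutative if $m_{S,T}(x,y)=m_{T,S}(y,x)$; a comonoid is cocommutative if $\Delta_{S,T}=\beta\circ\Delta_{T,S}$ where $\beta$ swaps tensor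 factors. *)

theory Defs
  imports Main
begin

text \<open>H I is the underlying set of the poset H[I]
  (only relevant for finite I), le I is its order, one is the unique element of H[{}],
  and rel s I : H[I] -> H[s`I] is the transport along the bijection s restricted to I.\<close>

definition poset_species ::
  "('e set \<Rightarrow> 'a set) \<Rightarrow> ('e set \<Rightarrow> 'a \<Rightarrow> 'a \<Rightarrow> bool) \<Rightarrow> 'a
   \<Rightarrow> (('e \<Rightarrow> 'e) \<Rightarrow> 'e set \<Rightarrow> 'a \<Rightarrow> 'a) \<Rightarrow> bool" where
  "poset_species H le one rel \<longleftrightarrow>
     (\<forall>I. finite I \<longrightarrow>
        (\<forall>x\<in>H I. le I x x) \<and>
        (\<forall>x\<in>H I. \<forall>y\<in>H I. le I x y \<and> le I y x \<longrightarrow> x = y) \<and>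
        (\<forall>x\<in>H I. \<forall>y\<in>H I. \<forall>z\<in>H I. le I x y \<and> le I y z \<longrightarrow> le I x z) \<and>
        (\<forall>x\<in>H I. \<forall>y\<in>H I. finite {z\<in>H I. le I x z \<and> le I z y})) \<and>
     H {} = {one} \<and>
     (\<forall>s I. finite I \<and> inj_on s I \<longrightarrow>
        bij_betw (rel s I) (H I) (H (s ` I)) \<and>
        (\<forall>x\<in>H I. \<forall>y\<in>H I. le I x y \<longrightarrow> le (s ` I) (rel s I x) (rel s I y))) \<and>
     (\<forall>I. \<forall>x\<in>H I. finite I \<longrightarrow> rel id I x = x) \<and>
     (\<forall>s t I. \<forall>x\<in>H I. finite I \<and> inj_on s I \<and> inj_on t (s ` I) \<longrightarrow>
        rel (t \<circ> s) I x = rel t (s ` I) (rel s I x)) \<and>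
     (\<forall>s t I. \<forall>x\<in>H I. finite I \<and> (\<forall>i\<in>I. s i = t i) \<longrightarrow> rel s I x = rel t I x)"

definition poset_hopf_monoid ::
  "('e set \<Rightarrow> 'a set) \<Rightarrow> ('e set \<Rightarrow> 'a \<Rightarrow> 'a \<Rightarrow> bool) \<Rightarrow> 'a
   \<Rightarrow> (('e \<Rightarrow> 'e) \<Rightarrow> 'e set \<Rightarrow> 'a \<Rightarrow> 'a)
   \<Rightarrow> ('e set \<Rightarrow> 'e set \<Rightarrow> 'a \<Rightarrow> 'a \<Rightarrow> 'a)
   \<Rightarrow> ('e set \<Rightarrow> 'e set \<Rightarrow> 'a \<Rightarrow> 'a \<times> 'a) \<Rightarrow> bool" where
  "poset_hopf_monoid H le one rel m D \<longleftrightarrow>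
     poset_species H le one rel \<and>
     (\<forall>S T. finite S \<and> finite T \<and> S \<inter> T = {} \<longrightarrow>
        (\<forall>x\<in>H S. \<forall>y\<in>H T. m S T x y \<in> H (S \<union> T)) \<and>
        (\<forall>x\<in>H S. \<forall>y\<in>H T. \<forall>x'\<in>H S. \<forall>y'\<in>H T. le S x x' \<and> le T y y' \<longrightarrow>
            le (S \<union> T) (m S T x y) (m S T x' y')) \<and>
        (\<forall>z\<in>H (S \<union> T). fst (D S T z) \<in> H S \<and> snd (D S T z) \<in> H T) \<and>
        (\<forall>z\<in>H (S \<union> T). \<forall>z'\<in>H (S \<union> T). le (S \<union> T) z z' \<longrightarrow>
            le S (fst (D S T z)) (fst (D S T z')) \<and> le T (snd (D S T z)) (snd (D S T z'))) \<and>
        (\<forall>s. inj_on s (S \<union> T) \<longrightarrow>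
            (\<forall>x\<in>H S. \<forall>y\<in>H T. rel s (S \<union> T) (m S T x y)
                = m (s ` S) (s ` T) (rel s S x) (rel s T y)) \<and>
            (\<forall>z\<in>H (S \<union> T). D (s ` S) (s ` T) (rel s (S \<union> T) z)
                = (rel s S (fst (D S T z)), rel s T (snd (D S T z)))))) \<and>
     (\<forall>I. \<forall>x\<in>H I. finite I \<longrightarrow> m {} I one x = x \<and> m I {} x one = x) \<and>
     (\<forall>I. \<forall>x\<in>H I. finite I \<longrightarrow> D {} I x = (one, x) \<and> D I {} x = (x, one)) \<and>
     (\<forall>R S T. finite R \<and> finite S \<and> finite T \<and> R \<inter> S = {} \<and> R \<inter> T = {} \<and> S \<inter> T = {} \<longrightarrow>
        (\<forall>x\<in>H R. \<forall>y\<in>H S. \<forall>z\<in>H T.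
            m (R \<union> S) T (m R S x y) z = m R (S \<union> T) x (m S T y z)) \<and>
        (\<forall>w\<in>H (R \<union> S \<union> T).
            fst (D R S (fst (D (R \<union> S) T w))) = fst (D R (S \<union> T) w) \<and>
            snd (D R S (fst (D (R \<union> S) T w))) = fst (D S T (snd (D R (S \<union> T) w))) \<and>
            snd (D (R \<union> S) T w) = snd (D S T (snd (D R (S \<union> T) w))))) \<and>
     (\<forall>S1 S2 T1 T2. finite S1 \<and> finite S2 \<and> S1 \<inter> S2 = {} \<and> T1 \<inter> T2 = {} \<and>
          S1 \<union> S2 = T1 \<union> T2 \<longrightarrow>
        (\<forall>x\<in>H S1. \<forall>y\<in>H S2.
           D T1 T2 (m S1 S2 x y) =
             (m (S1 \<inter> T1) (S2 \<inter> T1) (fst (D (S1 \<inter> T1) (S1 \<inter> T2) x)) (fst (D (S2 \<inter> T1) (S2 \<inter> T2) y)),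
              m (S1 \<inter> T2) (S2 \<inter> T2) (snd (D (S1 \<inter> T1) (S1 \<inter> T2) x)) (snd (D (S2 \<inter> T1) (S2 \<inter> T2) y)))))"

text \<open>Self-adjointness: m_{S,T} and D_{S,T} form a Galois connection (with the product order
  on H[S] x H[T]) for all S, T, uniformly either with m left adjoint or with D left adjoint.\<close>

definition self_adjoint ::
  "('e set \<Rightarrow> 'a set) \<Rightarrow> ('e set \<Rightarrow> 'a \<Rightarrow> 'a \<Rightarrow> bool)
   \<Rightarrow> ('e set \<Rightarrow> 'e set \<Rightarrow> 'a \<Rightarrow> 'a \<Rightarrow> 'a)
   \<Rightarrow> ('e set \<Rightarrow> 'e set \<Rightarrow> 'a \<Rightarrow> 'a \<times> 'a) \<Rightarrow> bool" where
  "self_adjoint H le m D \<longleftrightarrow>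
     (\<forall>S T. finite S \<and> finite T \<and> S \<inter> T = {} \<longrightarrow>
        (\<forall>x\<in>H S. \<forall>y\<in>H T. \<forall>z\<in>H (S \<union> T).
           le (S \<union> T) (m S T x y) z \<longleftrightarrow>
           le S x (fst (D S T z)) \<and> le T y (snd (D S T z)))) \<or>
     (\<forall>S T. finite S \<and> finite T \<and> S \<inter> T = {} \<longrightarrow>
        (\<forall>x\<in>H S. \<forall>y\<in>H T. \<forall>z\<in>H (S \<union> T).
           le S (fst (D S T z)) x \<and> le T (snd (D S T z)) y \<longleftrightarrow>
           le (S \<union> T) z (m S T x y)))"

text \<open>Linearization kH.  kH[I] = finitely supported k-valued functions on H[I];
  kH[S] \<otimes> kH[T] is identified with finitely supported functions on H[S] x H[T]
  (the free vector space on the product of the bases).  The multiplication and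
  comultiplication of kH are the linear extensions of m and D.\<close>

definition finsupp_on :: "'b set \<Rightarrow> ('b \<Rightarrow> 'k::zero) \<Rightarrow> bool" where
  "finsupp_on A f \<longleftrightarrow> finite {p. f p \<noteq> 0} \<and> {p. f p \<noteq> 0} \<subseteq> A"

definition lin_mult ::
  "('e set \<Rightarrow> 'a set) \<Rightarrow> ('e set \<Rightarrow> 'e set \<Rightarrow> 'a \<Rightarrow> 'a \<Rightarrow> 'a)
   \<Rightarrow> 'e set \<Rightarrow> 'e set \<Rightarrow> ('a \<times> 'a \<Rightarrow> 'k::field) \<Rightarrow> 'a \<Rightarrow> 'k" where
  "lin_mult H m S T F z =
     (\<Sum>p\<in>{p\<in>H S \<times> H T. F p \<noteq> 0 \<and> m S T (fst p) (snd p) = z}. F p)"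

definition lin_comult ::
  "('e set \<Rightarrow> 'a set) \<Rightarrow> ('e set \<Rightarrow> 'e set \<Rightarrow> 'a \<Rightarrow> 'a \<times> 'a)
   \<Rightarrow> 'e set \<Rightarrow> 'e set \<Rightarrow> ('a \<Rightarrow> 'k::field) \<Rightarrow> 'a \<times> 'a \<Rightarrow> 'k" where
  "lin_comult H D S T f p =
     (\<Sum>z\<in>{z\<in>H (S \<union> T). f z \<noteq> 0 \<and> D S T z = p}. f z)"

definition lin_commutative ::
  "'k::field itself \<Rightarrow> ('e set \<Rightarrow> 'a set) \<Rightarrow> ('e set \<Rightarrow> 'e set \<Rightarrow> 'a \<Rightarrow> 'a \<Rightarrow> 'a) \<Rightarrow> bool" where
  "lin_commutative _ H m \<longleftrightarrow>
     (\<forall>S T (F :: 'a \<times> 'a \<Rightarrow> 'k). finite S \<and> finite T \<and> S \<inter> T = {} \<and> finsupp_on (H S \<times> H T) F \<longrightarrow>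
        lin_mult H m S T F = lin_mult H m T S (F \<circ> prod.swap))"

definition lin_cocommutative ::
  "'k::field itself \<Rightarrow> ('e set \<Rightarrow> 'a set) \<Rightarrow> ('e set \<Rightarrow> 'e set \<Rightarrow> 'a \<Rightarrow> 'a \<times> 'a) \<Rightarrow> bool" where
  "lin_cocommutative _ H D \<longleftrightarrow>
     (\<forall>S T (f :: 'a \<Rightarrow> 'k). finite S \<and> finite T \<and> S \<inter> T = {} \<and> finsupp_on (H (S \<union> T)) f \<longrightarrow>
        lin_comult H D S T f = lin_comult H D T S f \<circ> prod.swap)"

end

theory Submission
  imports Defs
begin

lemma hm_top:
  assumes "poset_hopf_monoid H le one rel m D"
  shows "poset_species H le one rel"
    and "\<forall>S T. finite S \<and> finite T \<and> S \<inter> T = {} \<longrightarrow>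
        (\<forall>x\<in>H S. \<forall>y\<in>H T. m S T x y \<in> H (S \<union> T)) \<and>
        (\<forall>x\<in>H S. \<forall>y\<in>H T. \<forall>x'\<in>H S. \<forall>y'\<in>H T. le S x x' \<and> le T y y' \<longrightarrow>
            le (S \<union> T) (m S T x y) (m S T x' y')) \<and>
        (\<forall>z\<in>H (S \<union> T). fst (D S T z) \<in> H S \<and> snd (D S T z) \<in> H T) \<and>
        (\<forall>z\<in>H (S \<union> T). \<forall>z'\<in>H (S \<union> T). le (S \<union> T) z z' \<longrightarrow>
            le S (fst (D S T z)) (fst (D S T z')) \<and> le T (snd (D S T z)) (snd (D S T z'))) \<and>
        (\<forall>s. inj_on s (S \<union> T) \<longrightarrow>
            (\<forall>x\<in>H S. \<forall>y\<in>H T. rel s (S \<union> T) (m S T x y)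
                = m (s ` S) (s ` T) (rel s S x) (rel s T y)) \<and>
            (\<forall>z\<in>H (S \<union> T). D (s ` S) (s ` T) (rel s (S \<union> T) z)
                = (rel s S (fst (D S T z)), rel s T (snd (D S T z)))))"
    and "\<forall>I. \<forall>x\<in>H I. finite I \<longrightarrow> m {} I one x = x \<and> m I {} x one = x"
    and "\<forall>I. \<forall>x\<in>H I. finite I \<longrightarrow> D {} I x = (one, x) \<and> D I {} x = (x, one)"
    and "\<forall>S1 S2 T1 T2. finite S1 \<and> finite S2 \<and> S1 \<inter> S2 = {} \<and> T1 \<inter> T2 = {} \<and>
          S1 \<union> S2 = T1 \<union> T2 \<longrightarrow>
        (\<forall>x\<in>H S1. \<forall>y\<in>H S2.
           D T1 T2 (m S1 S2 x y) =
             (m (S1 \<inter> T1) (S2 \<inter> T1) (fst (D (S1 \<inter> T1) (S1 \<inter> T2) x)) (fst (D (S2 \<inter> T1) (S2 \<inter> T2) y)),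
              m (S1 \<inter> T2) (S2 \<inter> T2) (snd (D (S1 \<inter> T1) (S1 \<inter> T2) x)) (snd (D (S2 \<inter> T1) (S2 \<inter> T2) y))))"
  using assms unfolding poset_hopf_monoid_def by - (elim conjE, assumption)+

lemma hm_closed:
  assumes h: "poset_hopf_monoid H le one rel m D" and f: "finite S" "finite T" "S \<inter> T = {}"
  shows "x \<in> H S \<Longrightarrow> y \<in> H T \<Longrightarrow> m S T x y \<in> H (S \<union> T)"
    and "z \<in> H (S \<union> T) \<Longrightarrow> fst (D S T z) \<in> H S"
    and "z \<in> H (S \<union> T) \<Longrightarrow> snd (D S T z) \<in> H T"
proof -
  note X = hm_top(2)[OF h, rule_format, OF conjI[OF f(1) conjI[OF f(2) f(3)]]]
  note P1 = conjunct1[OF X]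
  note P3 = conjunct1[OF conjunct2[OF conjunct2[OF X]]]
  show "x \<in> H S \<Longrightarrow> y \<in> H T \<Longrightarrow> m S T x y \<in> H (S \<union> T)"
    by (rule bspec[OF bspec[OF P1]])
  show "z \<in> H (S \<union> T) \<Longrightarrow> fst (D S T z) \<in> H S"
    by (rule conjunct1[OF bspec[OF P3]])
  show "z \<in> H (S \<union> T) \<Longrightarrow> snd (D S T z) \<in> H T"
    by (rule conjunct2[OF bspec[OF P3]])
qed

lemma ps_top:
  assumes "poset_species H le one rel"
  shows "\<forall>I. finite I \<longrightarrow>
        (\<forall>x\<in>H I. le I x x) \<and>
        (\<forall>x\<in>H I. \<forall>y\<in>H I. le I x y \<and> le I y x \<longrightarrow> x = y) \<and>
        (\<forall>x\<in>H I. \<forall>y\<in>H I. \<forall>z\<in>H I. le I x y \<and> le I y z \<longrightarrow> le I x z) \<and>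
        (\<forall>x\<in>H I. \<forall>y\<in>H I. finite {z\<in>H I. le I x z \<and> le I z y})"
  using assms unfolding poset_species_def by (rule conjunct1)

lemma ps_refl:
  assumes "poset_species H le one rel" "finite I" "x \<in> H I"
  shows "le I x x"
  by (rule bspec[OF conjunct1[OF ps_top[OF assms(1), rule_format, OF assms(2)]] assms(3)])

lemma ps_anti:
  assumes "poset_species H le one rel" "finite I" "x \<in> H I" "y \<in> H I" "le I x y" "le I y x"
  shows "x = y"
proof -
  note A = conjunct1[OF conjunct2[OF ps_top[OF assms(1), rule_format, OF assms(2)]]]
  show ?thesis using A[rule_format, OF assms(3,4)] assms(5,6) by simp
qed

lemma dswap:
  assumes h: "poset_hopf_monoid H le one rel m D"
    and f: "finite S" "finite T" "S \<inter> T = {}" and xy: "x \<in> H S" "y \<in> H T"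
  shows "D T S (m S T x y) = (y, x)"
proof -
  have e: "T \<inter> S = {}" using f by blast
  have u1: "D {} S x = (one, x)" "D T {} y = (y, one)" "m {} T one y = y" "m S {} x one = x"
    using hm_top(3,4)[OF h] f xy by auto
  show ?thesis using hm_top(5)[OF h, rule_format, of S T T S x y] f e xy u1 by (simp add: Un_commute)
qed

lemma mcomm:
  assumes h: "poset_hopf_monoid H le one rel m D" and sa: "self_adjoint H le m D"
    and f: "finite S" "finite T" "S \<inter> T = {}" and xy: "x \<in> H S" "y \<in> H T"
  shows "m S T x y = m T S y x"
proof -
  have f': "T \<inter> S = {}" using f by blast
  have d1: "D T S (m S T x y) = (y, x)" using dswap[OF h f xy] .
  have d2: "D S T (m T S y x) = (x, y)" using dswap[OF h f(2,1) f' xy(2,1)] .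
  have ps: "poset_species H le one rel" using hm_top(1)[OF h] .
  have m1: "m S T x y \<in> H (S \<union> T)" using hm_closed(1)[OF h f xy] .
  have m2: "m T S y x \<in> H (S \<union> T)" using hm_closed(1)[OF h f(2,1) f' xy(2,1)] by (simp add: Un_commute)
  have rx: "le S x x" and ry: "le T y y" and fin: "finite (S \<union> T)"
    using ps_refl[OF ps f(1) xy(1)] ps_refl[OF ps f(2) xy(2)] f by auto
  have m1': "m S T x y \<in> H (T \<union> S)" using m1 by (simp add: Un_commute)
  have fST: "finite S \<and> finite T \<and> S \<inter> T = {}" and fTS: "finite T \<and> finite S \<and> T \<inter> S = {}"
    using f f' by auto
  have "le (S \<union> T) (m S T x y) (m T S y x) \<and> le (S \<union> T) (m T S y x) (m S T x y)"
  using sa unfolding self_adjoint_def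
  proof (elim disjE)
    assume True: "\<forall>S T. finite S \<and> finite T \<and> S \<inter> T = {} \<longrightarrow>
        (\<forall>x\<in>H S. \<forall>y\<in>H T. \<forall>z\<in>H (S \<union> T).
           le (S \<union> T) (m S T x y) z \<longleftrightarrow>
           le S x (fst (D S T z)) \<and> le T y (snd (D S T z)))"
    have a: "le (S \<union> T) (m S T x y) (m T S y x)"
      using True[rule_format, OF fST xy m2] d2 rx ry by simp
    have b: "le (T \<union> S) (m T S y x) (m S T x y)"
      using True[rule_format, OF fTS xy(2,1) m1'] d1 rx ry by simp
    show ?thesis using a b by (simp add: Un_commute)
  next
    assume G: "\<forall>S T. finite S \<and> finite T \<and> S \<inter> T = {} \<longrightarrow>
        (\<forall>x\<in>H S. \<forall>y\<in>H T. \<forall>z\<in>H (S \<union> T).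
           le S (fst (D S T z)) x \<and> le T (snd (D S T z)) y \<longleftrightarrow>
           le (S \<union> T) z (m S T x y))"
    have a: "le (T \<union> S) (m S T x y) (m T S y x)"
      using G[rule_format, OF fTS xy(2,1) m1'] d1 rx ry by simp
    have b: "le (S \<union> T) (m T S y x) (m S T x y)"
      using G[rule_format, OF fST xy m2] d2 rx ry by simp
    show ?thesis using a b by (simp add: Un_commute)
  qed
  then show ?thesis by (intro ps_anti[OF ps fin m1 m2]) (erule conjE, assumption)+
qed


lemma dcomm:
  assumes h: "poset_hopf_monoid H le one rel m D" and sa: "self_adjoint H le m D"
    and f: "finite S" "finite T" "S \<inter> T = {}" and z: "z \<in> H (S \<union> T)"
  shows "D S T z = prod.swap (D T S z)"
proof -
  have f': "T \<inter> S = {}" using f by blast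
  have z': "z \<in> H (T \<union> S)" using z by (simp add: Un_commute)
  have ps: "poset_species H le one rel" using hm_top(1)[OF h] .
  have fin: "finite S" "finite T" using f by auto
  have inS: "fst (D S T z) \<in> H S" "snd (D S T z) \<in> H T"
    using hm_closed(2,3)[OF h f z] by auto
  have inT: "fst (D T S z) \<in> H T" "snd (D T S z) \<in> H S"
    using hm_closed(2,3)[OF h f(2,1) f' z'] by auto
  have MC: "\<And>x y. x \<in> H S \<Longrightarrow> y \<in> H T \<Longrightarrow> m S T x y = m T S y x"
    using mcomm[OF h sa f] by blast
  have antS: "\<And>x y. x \<in> H S \<Longrightarrow> y \<in> H S \<Longrightarrow> le S x y \<Longrightarrow> le S y x \<Longrightarrow> x = y"
    using ps_anti[OF ps fin(1)] by blast
  have antT: "\<And>x y. x \<in> H T \<Longrightarrow> y \<in> H T \<Longrightarrow> le T x y \<Longrightarrow> le T y x \<Longrightarrow> x = y"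
    using ps_anti[OF ps fin(2)] by blast
  have reS: "\<And>x. x \<in> H S \<Longrightarrow> le S x x" and reT: "\<And>x. x \<in> H T \<Longrightarrow> le T x x"
    using ps_refl[OF ps fin(1)] ps_refl[OF ps fin(2)] by blast+
  have fST: "finite S \<and> finite T \<and> S \<inter> T = {}" and fTS: "finite T \<and> finite S \<and> T \<inter> S = {}"
    using f f' by auto
  define a where "a = fst (D S T z)"
  define b where "b = snd (D S T z)"
  define c where "c = fst (D T S z)"
  define d where "d = snd (D T S z)"
  note defs = a_def b_def c_def d_def
  have ab: "a \<in> H S" "b \<in> H T" "c \<in> H T" "d \<in> H S" using inS inT defs by auto
  have "a = d \<and> b = c"
  using sa unfolding self_adjoint_def
  proof (elim disjE)
    assume True: "\<forall>S T. finite S \<and> finite T \<and> S \<inter> T = {} \<longrightarrow>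
        (\<forall>x\<in>H S. \<forall>y\<in>H T. \<forall>z\<in>H (S \<union> T).
           le (S \<union> T) (m S T x y) z \<longleftrightarrow>
           le S x (fst (D S T z)) \<and> le T y (snd (D S T z)))"
    have E: "\<And>x y. x \<in> H S \<Longrightarrow> y \<in> H T \<Longrightarrow> (le S x a \<and> le T y b) = (le T y c \<and> le S x d)"
    proof -
      fix x y assume xy: "x \<in> H S" "y \<in> H T"
      have 1: "le (S \<union> T) (m S T x y) z = (le S x a \<and> le T y b)"
        using True[rule_format, OF fST xy z] defs by simp
      have 2: "le (T \<union> S) (m T S y x) z = (le T y c \<and> le S x d)"
        using True[rule_format, OF fTS xy(2,1) z'] defs by simp
      show "(le S x a \<and> le T y b) = (le T y c \<and> le S x d)"
        using 1 2 MC[OF xy] by (simp add: Un_commute)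
    qed
    have "le S a d \<and> le T b c" using E[OF ab(1,2)] reS reT ab by blast
    moreover have "le S d a \<and> le T c b" using E[OF ab(4,3)] reS reT ab by blast
    ultimately show ?thesis using antS[OF ab(1,4)] antT[OF ab(2,3)] by (elim conjE) simp
  next
    assume G: "\<forall>S T. finite S \<and> finite T \<and> S \<inter> T = {} \<longrightarrow>
        (\<forall>x\<in>H S. \<forall>y\<in>H T. \<forall>z\<in>H (S \<union> T).
           le S (fst (D S T z)) x \<and> le T (snd (D S T z)) y \<longleftrightarrow>
           le (S \<union> T) z (m S T x y))"
    have E: "\<And>x y. x \<in> H S \<Longrightarrow> y \<in> H T \<Longrightarrow> (le S a x \<and> le T b y) = (le T c y \<and> le S d x)"
    proof -
      fix x y assume xy: "x \<in> H S" "y \<in> H T"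
      have 1: "le (S \<union> T) z (m S T x y) = (le S a x \<and> le T b y)"
        using G[rule_format, OF fST xy z] defs by simp
      have 2: "le (T \<union> S) z (m T S y x) = (le T c y \<and> le S d x)"
        using G[rule_format, OF fTS xy(2,1) z'] defs by simp
      show "(le S a x \<and> le T b y) = (le T c y \<and> le S d x)"
        using 1 2 MC[OF xy] by (simp add: Un_commute)
    qed
    have "le S d a \<and> le T c b" using E[OF ab(1,2)] reS reT ab by blast
    moreover have "le S a d \<and> le T b c" using E[OF ab(4,3)] reS reT ab by blast
    ultimately show ?thesis using antS[OF ab(1,4)] antT[OF ab(2,3)] by (elim conjE) simp
  qed
  then show ?thesis using defs by (simp add: prod_eq_iff)
qed

theorem mainTheorem10:
  fixes H :: "'e set \<Rightarrow> 'a set" and le :: "'e set \<Rightarrow> 'a \<Rightarrow> 'a \<Rightarrow> bool" and one :: 'a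
    and rel :: "('e \<Rightarrow> 'e) \<Rightarrow> 'e set \<Rightarrow> 'a \<Rightarrow> 'a"
    and m :: "'e set \<Rightarrow> 'e set \<Rightarrow> 'a \<Rightarrow> 'a \<Rightarrow> 'a"
    and D :: "'e set \<Rightarrow> 'e set \<Rightarrow> 'a \<Rightarrow> 'a \<times> 'a"
  assumes "poset_hopf_monoid H le one rel m D"
    and "self_adjoint H le m D"
  shows "lin_commutative TYPE('k::field_char_0) H m \<and> lin_cocommutative TYPE('k) H D"
proof
  show "lin_commutative TYPE('k::field_char_0) H m"
    unfolding lin_commutative_def
  proof (intro allI impI)
    fix S T and F :: "'a \<times> 'a \<Rightarrow> 'k"
    assume A: "finite S \<and> finite T \<and> S \<inter> T = {} \<and> finsupp_on (H S \<times> H T) F"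
    show "lin_mult H m S T F = lin_mult H m T S (F \<circ> prod.swap)"
    proof
      fix z
      let ?A = "{p\<in>H S \<times> H T. F p \<noteq> 0 \<and> m S T (fst p) (snd p) = z}"
      have eq: "{p\<in>H T \<times> H S. (F \<circ> prod.swap) p \<noteq> 0 \<and> m T S (fst p) (snd p) = z}
          = prod.swap ` ?A"
      proof -
        have MC: "\<And>x y. x \<in> H S \<Longrightarrow> y \<in> H T \<Longrightarrow> m S T x y = m T S y x"
          using mcomm[OF assms] A by blast
        show ?thesis using A by (auto simp: image_iff MC)
      qed
      show "lin_mult H m S T F z = lin_mult H m T S (F \<circ> prod.swap) z"
        unfolding lin_mult_def eq
        by (subst sum.reindex) (auto simp: comp_def)
    qed
  qed
  show "lin_cocommutative TYPE('k) H D"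
    unfolding lin_cocommutative_def
  proof (intro allI impI)
    fix S T and f :: "'a \<Rightarrow> 'k"
    assume A: "finite S \<and> finite T \<and> S \<inter> T = {} \<and> finsupp_on (H (S \<union> T)) f"
    show "lin_comult H D S T f = lin_comult H D T S f \<circ> prod.swap"
    proof
      fix p
      have eq: "{z\<in>H (S \<union> T). f z \<noteq> 0 \<and> D S T z = p}
          = {z\<in>H (T \<union> S). f z \<noteq> 0 \<and> D T S z = prod.swap p}"
        using dcomm[OF assms] A by (auto simp: Un_commute)
      show "lin_comult H D S T f p = (lin_comult H D T S f \<circ> prod.swap) p"
        unfolding lin_comult_def comp_def eq by simp
    qed
  qed
qed

end
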